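(* Let $0\le\gamma<1$ and let $f=h+\overline{g}$ be harmonic in $\Omega_\gamma$, where $h,g$ are analytic in $\Omega_\gamma$ with $h(z)=\sum_{n=0}^\infty a_nz^n$, $g(z)=\sum_{n=0}^\infty b_nz^n$ for $z\in\mathbb{D}$, and suppose $|h(z)|+|g(z)|\le1$ for all $z\in\Omega_\gamma$. Then $$\sqrt{|a_0|^2+|b_0|^2}+\sum_{n=1}^\infty\sqrt{|a_n|^2+|b_n|^2}\,r^n\le1\quad\text{for } |z|=r\le r_0:=\frac{1+\gamma}{3+\gamma}.$$
   Context: $\mathbb{D}$ is the open unit disk. For $0\le\gamma<1$, $\Omega_\gamma=\{z\in\mathbb{C}:|z+\frac{\gamma}{1-\gamma}|<\frac{1}{1-\gamma}\}$, which contains $\mathbb{D}$. *)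

theory Defs
  imports "HOL-Complex_Analysis.Complex_Analysis"
begin

definition Omega :: "real \<Rightarrow> complex set" where
  "Omega \<gamma> = ball (complex_of_real (- \<gamma> / (1 - \<gamma>))) (1 / (1 - \<gamma>))"

end

theory Submission
  imports Defs
begin

lemma psi_den_nz:
  fixes \<gamma> :: real and w :: complex
  assumes "0 \<le> \<gamma>" "\<gamma> < 1" "norm w < 1"
  shows "1 + of_real \<gamma> * w \<noteq> 0"
proof
  assume "1 + of_real \<gamma> * w = 0"
  hence "norm (of_real \<gamma> * w) = 1" by (metis add_eq_0_iff norm_minus_cancel norm_one)
  moreover have "norm (of_real \<gamma> * w) < 1"
  proof -
    have "norm (of_real \<gamma> * w) = \<gamma> * norm w" using assms(1) by (simp add: norm_mult)
    also have "\<dots> \<le> norm w" using assms by (simp add: mult_left_le_one_le)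
    finally show ?thesis using assms(3) by simp
  qed
  ultimately show False by simp
qed

lemma aux_ineq: "0 \<le> (g::real) \<Longrightarrow> g < 1 \<Longrightarrow> x^2 + y^2 < 1 \<Longrightarrow> (x + g)^2 + y^2 < (1 + g * x)^2 + (g*y)^2"
proof -
  assume a: "0 \<le> g" "g < 1" "x^2 + y^2 < 1"
  have "(1 + g * x)^2 + (g*y)^2 - ((x + g)^2 + y^2) = (1 - g^2) * (1 - x^2 - y^2)"
    by (simp add: power2_eq_square algebra_simps)
  moreover have "(1 - g^2) * (1 - x^2 - y^2) > 0"
  proof (intro mult_pos_pos)
    have "g * g \<le> g" using a by (simp add: mult_left_le_one_le)
    thus "0 < 1 - g^2" using a by (simp add: power2_eq_square)
  qed (use a in simp)
  ultimately show ?thesis by linarith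
qed

lemma psi_in_Omega:
  fixes \<gamma> :: real and w :: complex
  assumes "0 \<le> \<gamma>" "\<gamma> < 1" "norm w < 1"
  shows "(1 + of_real \<gamma>) * w / (1 + of_real \<gamma> * w) \<in> Omega \<gamma>"
proof -
  have d: "1 + of_real \<gamma> * w \<noteq> 0" using psi_den_nz assms by blast
  have "(1 + of_real \<gamma>) * w / (1 + of_real \<gamma> * w) - of_real (- \<gamma> / (1 - \<gamma>))
      = (w + of_real \<gamma>) / (of_real (1 - \<gamma>) * (1 + of_real \<gamma> * w))"
    using d assms by (simp add: field_simps)
  moreover have "norm (w + of_real \<gamma>) < norm (1 + of_real \<gamma> * w)"
  proof -
    have w2: "(Re w)^2 + (Im w)^2 < 1" using assms(3) by (simp add: norm_complex_def)
    have "(norm (w + of_real \<gamma>))^2 < (norm (1 + of_real \<gamma> * w))^2"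
      unfolding cmod_power2 using aux_ineq[OF assms(1,2) w2] by simp
    thus ?thesis by (rule power2_less_imp_less) simp
  qed
  note lt = this
  moreover have n1: "cmod (1 - complex_of_real \<gamma>) = 1 - \<gamma>" using assms
    by (metis abs_of_nonneg diff_ge_0_iff_ge less_imp_le norm_of_real of_real_1 of_real_diff)
  ultimately have "norm ((1 + of_real \<gamma>) * w / (1 + of_real \<gamma> * w) - of_real (- \<gamma> / (1 - \<gamma>)))
     = (norm (w + of_real \<gamma>) / norm (1 + of_real \<gamma> * w)) / (1 - \<gamma>)"
    using assms n1 by (simp_all add: norm_divide norm_mult)
  also have "\<dots> < 1 / (1 - \<gamma>)"
    using lt d assms by (intro divide_strict_right_mono) auto
  finally show ?thesis unfolding Omega_def mem_ball dist_norm by (subst norm_minus_commute) simp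
qed

lemma circ_int:
  assumes "\<rho> > 0"
  shows "contour_integral (circlepath 0 \<rho>) (\<lambda>u. f u / u)
       = 2 * of_real pi * \<i> * integral {0..1} (\<lambda>t. f (circlepath 0 \<rho> t))"
proof -
  have "contour_integral (circlepath 0 \<rho>) (\<lambda>u. f u / u)
      = integral {0..1} (\<lambda>t. f (circlepath 0 \<rho> t) / circlepath 0 \<rho> t * vector_derivative (circlepath 0 \<rho>) (at t))"
    by (rule contour_integral_integral)
  also have "\<dots> = integral {0..1} (\<lambda>t. 2 * of_real pi * \<i> * f (circlepath 0 \<rho> t))"
  proof (rule integral_cong)
    fix t assume "t \<in> {0..1::real}"
    have vd: "vector_derivative (circlepath 0 \<rho>) (at t) = 2 * pi * \<i> * \<rho> * exp (2 * of_real pi * \<i> * t)"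
      by (rule vector_derivative_at) (rule has_vector_derivative_circlepath)
    show "f (circlepath 0 \<rho> t) / circlepath 0 \<rho> t * vector_derivative (circlepath 0 \<rho>) (at t)
        = 2 * of_real pi * \<i> * f (circlepath 0 \<rho> t)"
      unfolding vd using assms by (simp add: circlepath field_simps)
  qed
  also have "\<dots> = 2 * of_real pi * \<i> * integral {0..1} (\<lambda>t. f (circlepath 0 \<rho> t))"
    by simp
  finally show ?thesis .
qed

lemma circ_cauchy:
  assumes "0 < \<rho>" "\<rho> < 1" "f holomorphic_on ball 0 1"
  shows "integral {0..1} (\<lambda>t. f (circlepath 0 \<rho> t)) = f 0"
proof -
  have sub: "cball 0 \<rho> \<subseteq> ball (0::complex) 1" using assms by auto
  have "((\<lambda>u. f u / (u - 0)) has_contour_integral (2 * of_real pi * \<i> * f 0)) (circlepath 0 \<rho>)"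
    using assms sub
    by (intro Cauchy_integral_circlepath)
       (auto intro: holomorphic_on_imp_continuous_on holomorphic_on_subset)
  hence "contour_integral (circlepath 0 \<rho>) (\<lambda>u. f u / u) = 2 * of_real pi * \<i> * f 0"
    by (simp add: contour_integral_unique)
  with circ_int[OF assms(1), of f] show ?thesis by simp
qed

lemma circ_integrable:
  fixes f :: "complex \<Rightarrow> complex"
  assumes "continuous_on (sphere 0 \<rho>) f" "0 < \<rho>"
  shows "(\<lambda>t. f (circlepath 0 \<rho> t)) integrable_on {0..1}"
proof -
  have "continuous_on {0..1} (circlepath 0 \<rho>)" using path_circlepath unfolding path_def by blast
  moreover have "circlepath 0 \<rho> ` {0..1} \<subseteq> sphere 0 \<rho>"
    using path_image_circlepath[of 0 \<rho>] assms unfolding path_image_def by auto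
  ultimately have "continuous_on {0..1} (\<lambda>t. f (circlepath 0 \<rho> t))"
    by (rule continuous_on_compose2[OF assms(1)])
  thus ?thesis by (rule integrable_continuous_real)
qed

lemma circ_norm: "norm (circlepath 0 \<rho> t) = \<bar>\<rho>\<bar>"
proof -
  have "norm (exp (2 * of_real pi * \<i> * of_real t)) = 1" by (simp add: norm_exp_eq_Re)
  thus ?thesis unfolding circlepath by (simp add: norm_mult)
qed

lemma conj_alg:
  fixes w :: complex and \<rho> \<gamma> :: real
  assumes w0: "w \<noteq> 0" and r0: "\<rho> > 0" and cw: "cnj w = of_real (\<rho>^2) / w"
  shows "(1 + of_real \<gamma> * w) ^ m / ((1 + of_real \<gamma>) ^ Suc m * w ^ Suc m)
       = cnj (w * (w + of_real (\<gamma> * \<rho>^2)) ^ m / ((1 + of_real \<gamma>) ^ Suc m * of_real (\<rho> ^ (2 * Suc m))))"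
proof -
  have h1: "of_real (\<rho>^2) / w + of_real (\<gamma> * \<rho>^2) = of_real (\<rho>^2) * ((1 + of_real \<gamma> * w) / w)"
    using w0 by (simp add: field_simps)
  have "cnj (w * (w + of_real (\<gamma> * \<rho>^2)) ^ m / ((1 + of_real \<gamma>) ^ Suc m * of_real (\<rho> ^ (2 * Suc m))))
     = cnj w * (cnj w + of_real (\<gamma> * \<rho>^2)) ^ m / ((1 + of_real \<gamma>) ^ Suc m * of_real (\<rho> ^ (2 * Suc m)))"
    by simp
  also have "\<dots> = of_real (\<rho>^2) / w * (of_real (\<rho>^2) ^ m * ((1 + of_real \<gamma> * w) ^ m / w ^ m))
       / ((1 + of_real \<gamma>) ^ Suc m * of_real (\<rho> ^ (2 * Suc m)))"
    unfolding cw h1 by (simp add: power_mult_distrib power_divide)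
  also have "\<dots> = (1 + of_real \<gamma> * w) ^ m / ((1 + of_real \<gamma>) ^ Suc m * w ^ Suc m)"
  proof -
    have e1: "(of_real (\<rho> ^ (2 * Suc m)) :: complex) = of_real (\<rho>^2) * of_real (\<rho>^2) ^ m"
    proof -
      have "\<rho> ^ (2 * Suc m) = \<rho>^2 * (\<rho>^2)^m" by (simp only: power_mult power_Suc)
      thus ?thesis by (simp only: of_real_mult of_real_power)
    qed
    have gen: "\<And>X A B :: complex. X \<noteq> 0 \<Longrightarrow> X / w * (X ^ m * (A / w ^ m)) / (B * (X * X ^ m)) = A / (B * w ^ Suc m)"
      using w0 by (simp add: field_simps)
    show ?thesis unfolding e1 by (rule gen) (use r0 in simp)
  qed
  finally show ?thesis by simp
qed

lemma alg1: fixes c D w :: complex assumes "c \<noteq> 0" "D \<noteq> 0" "w \<noteq> 0"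
  shows "c / D^2 * (1 / (c * w / D - 0)) = (1 / D) / (w - 0)"
  using assms by (simp add: field_simps power2_eq_square)
lemma alg2: fixes c D w X :: complex assumes "c \<noteq> 0" "D \<noteq> 0" "w \<noteq> 0"
  shows "c / D^2 * (X / (c * w / D) ^ Suc (Suc m)) = X * (D ^ m / (c ^ Suc m * w ^ Suc m)) / w"
proof -
  have "(c * w / D) ^ Suc (Suc m) = c^2 * c^m * w^2 * w^m / (D^2 * D^m)"
    by (simp add: power_divide power_mult_distrib power2_eq_square mult_ac)
  thus ?thesis using assms by (simp add: field_simps power2_eq_square)
qed

lemma key:
  fixes \<gamma> \<rho> :: real and F :: "complex \<Rightarrow> complex" and n :: nat
  assumes g0: "0 \<le> \<gamma>" and g1: "\<gamma> < 1" and holF: "F holomorphic_on Omega \<gamma>"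
    and bnd: "\<And>z. z \<in> Omega \<gamma> \<Longrightarrow> norm (F z) \<le> 1"
    and n: "n \<ge> 1" and r0: "0 < \<rho>" and r1: "\<rho> < 1"
  shows "norm ((deriv ^^ n) F 0 / fact n) * \<rho> ^ n \<le> 2 * (1 - Re (F 0)) / (1 + \<gamma>)"
proof -
  define \<psi> where "\<psi> = (\<lambda>w::complex. (1 + of_real \<gamma>) * w / (1 + of_real \<gamma> * w))"
  define G where "G = (\<lambda>w. F (\<psi> w))"
  define e where "e = circlepath (0::complex) \<rho>"
  define cn where "cn = (deriv ^^ n) F 0 / fact n"
  obtain m where nm: "n = Suc m" using n by (cases n) auto
  define k where "k = (\<lambda>w::complex. (1 + of_real \<gamma> * w) ^ m / ((1 + of_real \<gamma>) ^ Suc m * w ^ Suc m))"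
  define kt where "kt = (\<lambda>w::complex. w * (w + of_real (\<gamma> * \<rho>^2)) ^ m / ((1 + of_real \<gamma>) ^ Suc m * of_real (\<rho> ^ (2 * Suc m))))"
  have den: "\<And>w::complex. norm w < 1 \<Longrightarrow> 1 + of_real \<gamma> * w \<noteq> 0" by (rule psi_den_nz[OF g0 g1])
  have psiO: "\<And>w::complex. norm w < 1 \<Longrightarrow> \<psi> w \<in> Omega \<gamma>" unfolding \<psi>_def by (rule psi_in_Omega[OF g0 g1])
  have opO: "open (Omega \<gamma>)" and cvO: "convex (Omega \<gamma>)" unfolding Omega_def by auto
  have O0: "0 \<in> Omega \<gamma>" using psiO[of 0] by (simp add: \<psi>_def)
  have g1p: "1 + of_real \<gamma> \<noteq> (0::complex)"
  proof
    assume "1 + of_real \<gamma> = (0::complex)"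
    hence "Re (1 + of_real \<gamma>) = Re (0::complex)" by simp
    thus False using g0 by simp
  qed
  have holpsi: "\<psi> holomorphic_on ball 0 1" unfolding \<psi>_def using den by (intro holomorphic_intros) auto
  have psi_der: "deriv \<psi> w = (1 + of_real \<gamma>) / (1 + of_real \<gamma> * w)^2" if w: "norm w < 1" for w :: complex
  proof -
    have "(\<psi> has_field_derivative (1 + of_real \<gamma>) / (1 + of_real \<gamma> * w)^2) (at w)"
      unfolding \<psi>_def using den[OF w]
      by (auto intro!: derivative_eq_intros simp: field_simps power2_eq_square)
    thus ?thesis by (rule DERIV_imp_deriv)
  qed
  have holG: "G holomorphic_on ball 0 1"
  proof -
    have "\<psi> ` ball 0 1 \<subseteq> Omega \<gamma>" using psiO by auto
    from holomorphic_on_compose_gen[OF holpsi holF this] show ?thesis by (simp add: o_def G_def)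
  qed
  have G0: "G 0 = F 0" by (simp add: G_def \<psi>_def)
  have Gb: "norm (G w) \<le> 1" if "norm w < 1" for w :: complex using bnd psiO that G_def by simp
  have pe: "path_image e = sphere 0 \<rho>" using r0 by (simp add: e_def)
  have pe1: "path_image e \<subseteq> ball 0 1" using pe r1 by auto
  have ve: "valid_path e" "pathfinish e = pathstart e" by (simp_all add: e_def)
  have sph: "w \<noteq> 0 \<and> norm w < 1" if "w \<in> sphere 0 \<rho>" for w :: complex using r0 r1 that by auto
  define P where "P = \<psi> \<circ> e"
  have vP: "valid_path P" unfolding P_def
    by (rule valid_path_compose_holomorphic[OF ve(1) holpsi _ pe1]) auto
  have lP: "pathfinish P = pathstart P" using ve(2) by (simp add: P_def pathfinish_compose pathstart_compose)
  have psi_nz: "\<psi> w \<noteq> 0" if "w \<noteq> 0" "norm w < 1" for w :: complex using den[OF that(2)] g1p that(1) by (simp add: \<psi>_def)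
  have pP: "path_image P \<subseteq> Omega \<gamma> - {0}" unfolding P_def path_image_compose pe
    using sph psiO psi_nz by auto
  have anpsi: "\<psi> analytic_on ball 0 1" using holpsi by (simp add: analytic_on_open)
  have "contour_integral P (\<lambda>w. 1/(w - 0)) = contour_integral e (\<lambda>w. deriv \<psi> w * (1/(\<psi> w - 0)))"
    unfolding P_def by (rule contour_integral_comp_analyticW[OF anpsi ve(1) pe1])
  also have "\<dots> = contour_integral e (\<lambda>w. (1 / (1 + of_real \<gamma> * w)) / (w - 0))"
  proof (rule contour_integral_cong)
    fix w assume "w \<in> path_image e"
    hence w: "w \<noteq> 0" "norm w < 1" using sph pe by auto
    show "deriv \<psi> w * (1/(\<psi> w - 0)) = (1 / (1 + of_real \<gamma> * w)) / (w - 0)"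
      unfolding psi_der[OF w(2)] by (simp only: \<psi>_def alg1[OF g1p den[OF w(2)] w(1)])
  qed simp
  also have "\<dots> = 2 * of_real pi * \<i> * (1 / (1 + of_real \<gamma> * 0))"
    unfolding e_def
  proof (rule contour_integral_unique, rule Cauchy_integral_circlepath)
    have "cball 0 \<rho> \<subseteq> ball (0::complex) 1" using r1 by auto
    hence hb: "(\<lambda>w. 1 / (1 + of_real \<gamma> * w)) holomorphic_on ball 0 1" using den
      by (intro holomorphic_intros) auto
    show "continuous_on (cball 0 \<rho>) (\<lambda>w::complex. 1 / (1 + of_real \<gamma> * w))"
      using hb r1 by (intro holomorphic_on_imp_continuous_on) (rule holomorphic_on_subset, auto)
    show "(\<lambda>w::complex. 1 / (1 + of_real \<gamma> * w)) holomorphic_on ball 0 \<rho>"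
      by (rule holomorphic_on_subset[OF hb]) (use r1 in auto)
  qed (use r0 in simp)
  finally have ci: "contour_integral P (\<lambda>w. 1/(w - 0)) = 2 * of_real pi * \<i>" by simp
  have "0 \<notin> path_image P" using pP by auto
  from winding_number_valid_path[OF vP this] ci have wn: "winding_number P 0 = 1" by simp
  have rth: "contour_integral P (\<lambda>z. F z / z ^ Suc n)
        = 2*pi*\<i> * (\<Sum>p\<in>{0}. winding_number P p * residue (\<lambda>z. F z / z ^ Suc n) p)"
  proof (rule Residue_theorem[OF opO convex_connected[OF cvO]])
    show "(\<lambda>z. F z / z ^ Suc n) holomorphic_on Omega \<gamma> - {0}"
      using holF by (intro holomorphic_intros) (auto intro: holomorphic_on_subset)
    show "\<forall>z. z \<notin> Omega \<gamma> \<longrightarrow> winding_number P z = 0"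
      using winding_number_zero_outside[OF valid_path_imp_path[OF vP] cvO lP] pP by auto
  qed (use vP lP pP in auto)
  have rs: "residue (\<lambda>z. F z / z ^ Suc n) 0 = cn"
    unfolding cn_def by (rule residue_holomorphic_over_power'[OF opO O0 holF])
  have res: "contour_integral P (\<lambda>z. F z / z ^ Suc n) = 2 * pi * \<i> * cn" using rth rs wn by simp
  have "contour_integral P (\<lambda>z. F z / z ^ Suc n) = contour_integral e (\<lambda>w. deriv \<psi> w * (F (\<psi> w) / \<psi> w ^ Suc n))"
    unfolding P_def by (rule contour_integral_comp_analyticW[OF anpsi ve(1) pe1])
  also have "\<dots> = contour_integral e (\<lambda>w. (G w * k w) / w)"
  proof (rule contour_integral_cong)
    fix w assume "w \<in> path_image e"
    hence w: "w \<noteq> 0" "norm w < 1" using sph pe by auto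
    show "deriv \<psi> w * (F (\<psi> w) / \<psi> w ^ Suc n) = (G w * k w) / w"
    proof -
      have psw: "\<psi> w = (1 + of_real \<gamma>) * w / (1 + of_real \<gamma> * w)" by (simp add: \<psi>_def)
      show ?thesis unfolding psi_der[OF w(2)] G_def k_def nm psw
        by (rule alg2[OF g1p den[OF w(2)] w(1)])
    qed
  qed simp
  also have "\<dots> = 2 * of_real pi * \<i> * integral {0..1} (\<lambda>t. G (e t) * k (e t))"
    unfolding e_def by (rule circ_int[OF r0])
  finally have I4: "integral {0..1} (\<lambda>t. G (e t) * k (e t)) = cn" using res by simp
  have holkt: "kt holomorphic_on ball 0 1" unfolding kt_def using g1p r0
    by (intro holomorphic_intros) auto
  have I1: "integral {0..1} (\<lambda>t. G (e t)) = F 0" using circ_cauchy[OF r0 r1 holG] G0 e_def by simp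
  have I2: "integral {0..1} (\<lambda>t. G (e t) * kt (e t)) = 0"
  proof -
    have hGk: "(\<lambda>w. G w * kt w) holomorphic_on ball 0 1" using holG holkt by (rule holomorphic_on_mult)
    have "integral {0..1} (\<lambda>t. G (e t) * kt (e t)) = G 0 * kt 0" unfolding e_def by (rule circ_cauchy[OF r0 r1 hGk])
    thus ?thesis by (simp add: kt_def)
  qed
  have I3: "integral {0..1} (\<lambda>t. kt (e t)) = 0"
  proof -
    have "integral {0..1} (\<lambda>t. kt (e t)) = kt 0" unfolding e_def by (rule circ_cauchy[OF r0 r1 holkt])
    thus ?thesis by (simp add: kt_def)
  qed
  have conjk: "k w = cnj (kt w)" if "w \<in> sphere 0 \<rho>" for w :: complex
  proof -
    have nw: "norm w = \<rho>" using that by simp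
    have w0: "w \<noteq> 0" using nw r0 by auto
    have cw: "cnj w = of_real (\<rho>^2) / w" using complex_norm_square[of w] nw w0 by (simp add: field_simps)
    show ?thesis unfolding k_def kt_def by (rule conj_alg[OF w0 r0 cw])
  qed
  have sphb: "sphere 0 \<rho> \<subseteq> ball (0::complex) 1" using r1 by auto
  have cG: "continuous_on (sphere 0 \<rho>) G"
    using holomorphic_on_imp_continuous_on[OF holG] sphb continuous_on_subset by blast
  have ckt: "continuous_on (sphere 0 \<rho>) kt"
    using holomorphic_on_imp_continuous_on[OF holkt] sphb continuous_on_subset by blast
  have ck: "continuous_on (sphere 0 \<rho>) k" unfolding k_def using r0 g1p
    by (intro continuous_intros) auto
  have es: "e t \<in> sphere 0 \<rho>" for t using circ_norm[of \<rho> t] r0 by (simp add: e_def)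
  have iG: "(\<lambda>t. G (e t)) integrable_on {0..1}" unfolding e_def by (rule circ_integrable[OF cG r0])
  have iGK: "(\<lambda>t. G (e t) * k (e t)) integrable_on {0..1}" unfolding e_def
    by (rule circ_integrable[OF _ r0]) (intro continuous_intros cG ck)
  have iKTc: "(\<lambda>t. cnj (kt (e t))) integrable_on {0..1}" unfolding e_def
    by (rule circ_integrable[OF _ r0]) (intro continuous_intros ckt)
  have iGKTc: "(\<lambda>t. cnj (G (e t) * kt (e t))) integrable_on {0..1}" unfolding e_def
    by (rule circ_integrable[OF _ r0]) (intro continuous_intros cG ckt)
  have iF: "(\<lambda>t. of_real (1 - Re (G (e t))) * k (e t)) integrable_on {0..1}" unfolding e_def
    by (rule circ_integrable[OF _ r0]) (intro continuous_intros cG ck)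
  have ptw: "of_real (1 - Re (G (e t))) * k (e t)
      = cnj (kt (e t)) - G (e t) * k (e t) / 2 - cnj (G (e t) * kt (e t)) / 2" for t
  proof -
    have ks: "k (e t) = cnj (kt (e t))" by (rule conjk[OF es])
    have re: "(of_real (Re z) :: complex) = (z + cnj z) / 2" for z
      using complex_add_cnj[of z] by simp
    show ?thesis unfolding ks by (simp add: re field_simps)
  qed
  have "integral {0..1} (\<lambda>t. of_real (1 - Re (G (e t))) * k (e t))
      = integral {0..1} (\<lambda>t. cnj (kt (e t)) - G (e t) * k (e t) / 2 - cnj (G (e t) * kt (e t)) / 2)"
    using ptw by simp
  also have "\<dots> = integral {0..1} (\<lambda>t. cnj (kt (e t))) - integral {0..1} (\<lambda>t. G (e t) * k (e t)) / 2
        - integral {0..1} (\<lambda>t. cnj (G (e t) * kt (e t))) / 2"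
    using iKTc iGK iGKTc
    by (simp add: integral_diff integrable_diff integrable_on_divide)
  also have "\<dots> = - cn / 2"
  proof -
    have c1: "integral {0..1} (\<lambda>t. cnj (kt (e t))) = 0"
      using integral_cnj[of "{0..1}" "\<lambda>t. kt (e t)"] I3 by simp
    have c2: "integral {0..1} (\<lambda>t. cnj (G (e t) * kt (e t))) = 0"
      using integral_cnj[of "{0..1}" "\<lambda>t. G (e t) * kt (e t)"] I2 by simp
    show ?thesis unfolding c1 c2 I4 by simp
  qed
  finally have intF: "integral {0..1} (\<lambda>t. of_real (1 - Re (G (e t))) * k (e t)) = - cn / 2" .
  define M where "M = 1 / ((1 + \<gamma>) * \<rho> ^ n)"
  have kb: "norm (k w) \<le> M" if w: "w \<in> sphere 0 \<rho>" for w :: complex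
  proof -
    have nw: "norm w = \<rho>" using w by simp
    have n1g: "norm (1 + complex_of_real \<gamma>) = 1 + \<gamma>"
      using g0 by (metis abs_of_nonneg add_nonneg_nonneg norm_of_real of_real_1 of_real_add zero_le_one)
    have "norm (1 + of_real \<gamma> * w) \<le> 1 + norm (of_real \<gamma> * w)" using norm_triangle_ineq[of "1::complex" "of_real \<gamma> * w"] by simp
    also have "norm (of_real \<gamma> * w) = \<gamma> * \<rho>" using g0 nw by (simp add: norm_mult)
    also have "1 + \<gamma> * \<rho> \<le> 1 + \<gamma>" using mult_right_le_one_le[of \<gamma> \<rho>] g0 r0 r1 by simp
    finally have pm: "norm (1 + of_real \<gamma> * w) ^ m \<le> (1 + \<gamma>) ^ m" by (rule power_mono) simp
    have "norm (k w) = norm (1 + of_real \<gamma> * w) ^ m / ((1 + \<gamma>) ^ Suc m * \<rho> ^ Suc m)"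
      unfolding k_def using n1g nw by (simp add: norm_divide norm_mult norm_power)
    also have "\<dots> \<le> (1 + \<gamma>) ^ m / ((1 + \<gamma>) ^ Suc m * \<rho> ^ Suc m)"
      by (rule divide_right_mono[OF pm]) (use g0 r0 in simp)
    also have "\<dots> = M"
    proof -
      have a: "(1 + \<gamma>) ^ m > 0" "\<rho> ^ Suc m > 0" "1 + \<gamma> > 0" using g0 r0 by simp_all
      have gen: "\<And>a b c::real. a \<noteq> 0 \<Longrightarrow> b \<noteq> 0 \<Longrightarrow> c \<noteq> 0 \<Longrightarrow> c / (a * c * b) = 1 / (a * b)"
        by (simp add: field_simps)
      show ?thesis unfolding M_def nm power_Suc[of "1 + \<gamma>"] by (rule gen) (use a in auto)
    qed
    finally show ?thesis .
  qed
  have hG: "((\<lambda>t. G (e t)) has_integral F 0) {0..1}" using iG I1 by (metis has_integral_integrable_integral)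
  have "((\<lambda>t. (1 - Re (G (e t))) * M) has_integral ((1 - Re (F 0)) * M)) {0..1}"
  proof -
    have h1: "((\<lambda>t::real. 1::real) has_integral 1) {0..1}" using has_integral_const_real[of "1::real" 0 1] by simp
    have "((\<lambda>t. 1 - Re (G (e t))) has_integral (1 - Re (F 0))) {0..1}"
      by (rule has_integral_diff[OF h1 has_integral_Re[OF hG]])
    thus ?thesis by (rule has_integral_mult_left)
  qed
  note hM = this
  have "norm (integral {0..1} (\<lambda>t. of_real (1 - Re (G (e t))) * k (e t)))
      \<le> integral {0..1} (\<lambda>t. (1 - Re (G (e t))) * M)"
  proof (rule integral_norm_bound_integral[OF iF])
    show "(\<lambda>t. (1 - Re (G (e t))) * M) integrable_on {0..1}" using hM by blast
    fix t :: real assume "t \<in> {0..1}"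
    have nl: "norm (e t) < 1" using es[of t] r1 by simp
    have "Re (G (e t)) \<le> 1" using complex_Re_le_cmod[of "G (e t)"] Gb[OF nl] by linarith
    hence nn: "0 \<le> 1 - Re (G (e t))" by simp
    have "norm (of_real (1 - Re (G (e t))) * k (e t)) = (1 - Re (G (e t))) * norm (k (e t))"
    proof -
      have "norm (complex_of_real (1 - Re (G (e t)))) = 1 - Re (G (e t))"
        using nn by (simp only: norm_of_real abs_of_nonneg)
      thus ?thesis by (simp only: norm_mult)
    qed
    also have "\<dots> \<le> (1 - Re (G (e t))) * M" using kb[OF es] nn by (rule mult_left_mono)
    finally show "norm (of_real (1 - Re (G (e t))) * k (e t)) \<le> (1 - Re (G (e t))) * M" .
  qed
  also have "\<dots> = (1 - Re (F 0)) * M" using hM by (rule integral_unique)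
  finally have "norm cn / 2 \<le> (1 - Re (F 0)) * M" unfolding intF by (simp add: norm_divide)
  hence "norm cn \<le> 2 * (1 - Re (F 0)) / (1 + \<gamma>) / \<rho> ^ n" unfolding M_def by (simp add: field_simps)
  moreover have rp: "0 < \<rho> ^ n" using r0 by simp
  ultimately have "norm cn * \<rho> ^ n \<le> 2 * (1 - Re (F 0)) / (1 + \<gamma>)" using pos_le_divide_eq[OF rp] by blast
  thus ?thesis unfolding cn_def .
qed

lemma norm_add_sq: "(norm ((x::complex) + y))^2 = (norm x)^2 + (norm y)^2 + 2 * Re (x * cnj y)"
  unfolding cmod_power2 by (simp add: power2_eq_square algebra_simps)

lemma paral: "(norm ((x::complex) + y))^2 + (norm (x - y))^2 = 2 * ((norm x)^2 + (norm y)^2)"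
  unfolding cmod_power2 by (simp add: power2_eq_square algebra_simps)

lemma key_lim:
  fixes \<gamma> :: real and F :: "complex \<Rightarrow> complex" and n :: nat
  assumes g0: "0 \<le> \<gamma>" and g1: "\<gamma> < 1" and holF: "F holomorphic_on Omega \<gamma>"
    and bnd: "\<And>z. z \<in> Omega \<gamma> \<Longrightarrow> norm (F z) \<le> 1" and n: "n \<ge> 1"
  shows "norm ((deriv ^^ n) F 0 / fact n) \<le> 2 * (1 - Re (F 0)) / (1 + \<gamma>)"
proof (rule field_le_mult_one_interval)
  fix z :: real assume z: "0 < z" "z < 1"
  have np: "0 < n" using n by simp
  have r0: "0 < root n z" using real_root_gt_zero[OF np z(1)] .
  have r1: "root n z < 1" using z np by simp
  have "norm ((deriv ^^ n) F 0 / fact n) * root n z ^ n \<le> 2 * (1 - Re (F 0)) / (1 + \<gamma>)"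
    by (rule key[OF g0 g1 holF bnd n r0 r1])
  thus "z * norm ((deriv ^^ n) F 0 / fact n) \<le> 2 * (1 - Re (F 0)) / (1 + \<gamma>)"
    using z np by (simp add: mult.commute)
qed

lemma coeff_series:
  fixes F :: "complex \<Rightarrow> complex" and c :: "nat \<Rightarrow> complex"
  assumes "\<And>z. z \<in> ball 0 1 \<Longrightarrow> (\<lambda>n. c n * z ^ n) sums F z"
  shows "c n = (deriv ^^ n) F 0 / fact n"
proof -
  have hb: "(1/2::complex) \<in> ball 0 1" by simp
  have "summable (\<lambda>n. c n * (1/2) ^ n)" using sums_summable[OF assms[OF hb]] .
  hence "conv_radius c \<ge> norm (1/2 :: complex)" by (rule conv_radius_geI)
  hence cr: "conv_radius c \<ge> ereal (1/2)" by simp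
  have e: "fps_nth (Abs_fps c) = c" by (simp add: fun_eq_iff)
  have h0: "(0::ereal) < ereal (1/2)" by simp
  have p1: "0 < fps_conv_radius (Abs_fps c)" unfolding fps_conv_radius_def e
    by (rule order.strict_trans2[OF h0 cr])
  have p2: "\<forall>\<^sub>F z in nhds 0. eval_fps (Abs_fps c) z = F z"
    unfolding eventually_nhds
  proof (rule exI[of _ "ball 0 1"], intro conjI ballI)
    show "open (ball (0::complex) 1)" by simp
    show "(0::complex) \<in> ball 0 1" by simp
    fix z :: complex assume zb: "z \<in> ball 0 1"
    show "eval_fps (Abs_fps c) z = F z" unfolding eval_fps_def e using sums_unique[OF assms[OF zb]] by simp
  qed
  have "F has_fps_expansion Abs_fps c"
    unfolding has_fps_expansion_def using p1 p2 by blast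
  from fps_nth_fps_expansion[OF this, of n] show ?thesis by simp
qed

theorem theorem2p7:
  fixes \<gamma> r :: real and h g :: "complex \<Rightarrow> complex" and a b :: "nat \<Rightarrow> complex"
  assumes "0 \<le> \<gamma>" and "\<gamma> < 1"
    and "h holomorphic_on Omega \<gamma>" and "g holomorphic_on Omega \<gamma>"
    and "\<And>z. z \<in> ball 0 1 \<Longrightarrow> (\<lambda>n. a n * z ^ n) sums h z"
    and "\<And>z. z \<in> ball 0 1 \<Longrightarrow> (\<lambda>n. b n * z ^ n) sums g z"
    and "\<And>z. z \<in> Omega \<gamma> \<Longrightarrow> norm (h z) + norm (g z) \<le> 1"
    and "0 \<le> r" and "r \<le> (1 + \<gamma>) / (3 + \<gamma>)"
  shows "summable (\<lambda>n. sqrt ((norm (a n))\<^sup>2 + (norm (b n))\<^sup>2) * r ^ n) \<and>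
         sqrt ((norm (a 0))\<^sup>2 + (norm (b 0))\<^sup>2)
           + (\<Sum>n. sqrt ((norm (a (Suc n)))\<^sup>2 + (norm (b (Suc n)))\<^sup>2) * r ^ (Suc n)) \<le> 1"
proof -
  note g0 = assms(1) and g1 = assms(2) and holh = assms(3) and holg = assms(4)
    and sh = assms(5) and sg = assms(6) and bnd = assms(7) and r0 = assms(8) and rle = assms(9)
  have r1: "r < 1"
  proof -
    have "(1 + \<gamma>) / (3 + \<gamma>) < 1" using g0 by simp
    thus ?thesis using rle by linarith
  qed
  have z0: "(0::complex) \<in> ball 0 1" by simp
  have ha0: "h 0 = a 0" using sh[OF z0] by simp
  have gb0: "g 0 = b 0" using sg[OF z0] by simp
  define s where "s n = sqrt ((norm (a n))\<^sup>2 + (norm (b n))\<^sup>2)" for n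
  define B where "B = 2 * (1 - s 0) / (1 + \<gamma>)"
  define \<beta> where "\<beta> = (if a 0 = 0 \<or> b 0 = 0 then \<i> else \<i> * a 0 * cnj (b 0) / of_real (norm (a 0) * norm (b 0)))"
  have n\<beta>: "norm \<beta> = 1"
    unfolding \<beta>_def by (auto simp: norm_mult norm_divide)
  have orth: "Re (a 0 * cnj (\<beta> * b 0)) = 0"
  proof (cases "a 0 = 0 \<or> b 0 = 0")
    case True thus ?thesis unfolding \<beta>_def by auto
  next
    case False
    hence "a 0 * cnj (\<beta> * b 0) = - \<i> * ((a 0 * cnj (a 0)) * (b 0 * cnj (b 0))) / of_real (norm (a 0) * norm (b 0))"
      unfolding \<beta>_def by (simp add: field_simps)
    also have "\<dots> = - \<i> * of_real ((norm (a 0))\<^sup>2 * (norm (b 0))\<^sup>2 / (norm (a 0) * norm (b 0)))"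
      by (simp add: complex_norm_square[symmetric])
    finally show ?thesis by simp
  qed
  have bound: "norm (a n + \<sigma> * \<beta> * b n) \<le> B" if n1: "n \<ge> 1" and sg1: "\<sigma> = 1 \<or> \<sigma> = -1" for n and \<sigma> :: complex
  proof -
    define w where "w = a 0 + \<sigma> * \<beta> * b 0"
    have ns: "norm \<sigma> = 1" using sg1 by auto
    have "a 0 * cnj (\<sigma> * \<beta> * b 0) = \<sigma> * (a 0 * cnj (\<beta> * b 0))"
      using sg1 by (auto simp: algebra_simps)
    moreover have "Re (\<sigma> * (a 0 * cnj (\<beta> * b 0))) = 0"
      using sg1
    proof
      assume "\<sigma> = 1" thus ?thesis using orth by (simp only: mult_1_left)
    next
      have neg: "\<And>X::complex. Re (-X) = - Re X" by simp
      assume "\<sigma> = -1" thus ?thesis using orth by (simp only: mult_minus1 neg)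
    qed
    ultimately have "Re (a 0 * cnj (\<sigma> * \<beta> * b 0)) = 0" by metis
    hence "(norm w)\<^sup>2 = (norm (a 0))\<^sup>2 + (norm (b 0))\<^sup>2"
      unfolding w_def norm_add_sq by (simp add: norm_mult ns n\<beta>)
    hence nw: "norm w = s 0" unfolding s_def by (metis norm_ge_zero real_sqrt_abs2 real_sqrt_unique)
    define lam where "lam = (if w = 0 then 1 else cnj w / of_real (norm w))"
    have nlam: "norm lam = 1" unfolding lam_def by (simp add: norm_divide)
    have lw: "lam * w = of_real (norm w)"
      unfolding lam_def using complex_norm_square[of w] by (simp add: field_simps power2_eq_square)
    define Fs where "Fs = (\<lambda>z. lam * (h z + \<sigma> * \<beta> * g z))"
    have holFs: "Fs holomorphic_on Omega \<gamma>" unfolding Fs_def using holh holg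
      by (intro holomorphic_intros)
    have bFs: "norm (Fs z) \<le> 1" if "z \<in> Omega \<gamma>" for z
    proof -
      have "norm (Fs z) = norm (h z + \<sigma> * \<beta> * g z)" unfolding Fs_def by (simp add: norm_mult nlam)
      also have "\<dots> \<le> norm (h z) + norm (\<sigma> * \<beta> * g z)" by (rule norm_triangle_ineq)
      also have "norm (\<sigma> * \<beta> * g z) = norm (g z)" by (simp add: norm_mult ns n\<beta>)
      finally show ?thesis using bnd[OF that] by linarith
    qed
    have sFs: "(\<lambda>k. (lam * (a k + \<sigma> * \<beta> * b k)) * z ^ k) sums Fs z" if "z \<in> ball 0 1" for z
    proof -
      have "(\<lambda>k. a k * z ^ k + \<sigma> * \<beta> * (b k * z ^ k)) sums (h z + \<sigma> * \<beta> * g z)"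
        by (intro sums_add sums_mult sh sg that)
      hence "(\<lambda>k. lam * (a k * z ^ k + \<sigma> * \<beta> * (b k * z ^ k))) sums (lam * (h z + \<sigma> * \<beta> * g z))"
        by (rule sums_mult)
      thus ?thesis unfolding Fs_def by (simp add: algebra_simps)
    qed
    have cf: "lam * (a n + \<sigma> * \<beta> * b n) = (deriv ^^ n) Fs 0 / fact n"
      by (rule coeff_series[OF sFs])
    have F0: "Fs 0 = of_real (s 0)" unfolding Fs_def using ha0 gb0 lw nw by (simp add: w_def)
    have "norm ((deriv ^^ n) Fs 0 / fact n) \<le> 2 * (1 - Re (Fs 0)) / (1 + \<gamma>)"
      by (rule key_lim[OF g0 g1 holFs bFs n1])
    hence "norm (lam * (a n + \<sigma> * \<beta> * b n)) \<le> B" unfolding cf[symmetric] F0 B_def by simp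
    thus ?thesis by (simp add: norm_mult nlam)
  qed
  have B0: "0 \<le> B" using bound[of 1 1, OF order_refl] norm_ge_zero[of "a 1 + 1 * \<beta> * b 1"] by (meson order.trans disjI1 refl)
  have sB: "s n \<le> B" if "n \<ge> 1" for n
  proof -
    have p1: "norm (a n + \<beta> * b n) \<le> B" using bound[OF that, of 1] by simp
    have p2: "norm (a n - \<beta> * b n) \<le> B" using bound[OF that, of "-1"] by simp
    have "(norm (a n + \<beta> * b n))\<^sup>2 + (norm (a n - \<beta> * b n))\<^sup>2 = 2 * ((norm (a n))\<^sup>2 + (norm (b n))\<^sup>2)"
      using paral[of "a n" "\<beta> * b n"] by (simp add: norm_mult n\<beta>)
    moreover have "(norm (a n + \<beta> * b n))\<^sup>2 \<le> B\<^sup>2" using p1 by (intro power_mono) auto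
    moreover have "(norm (a n - \<beta> * b n))\<^sup>2 \<le> B\<^sup>2" using p2 by (intro power_mono) auto
    ultimately have "(norm (a n))\<^sup>2 + (norm (b n))\<^sup>2 \<le> B\<^sup>2" by (smt (verit))
    hence "s n \<le> sqrt (B\<^sup>2)" unfolding s_def by (rule real_sqrt_le_mono)
    thus ?thesis using B0 by simp
  qed
  have sge: "0 \<le> s n" for n unfolding s_def by simp
  have gs: "(\<lambda>n. B * r * r ^ n) sums (B * r * (1 / (1 - r)))"
    using geometric_sums[of r] r0 r1 by (intro sums_mult) simp
  have cmp: "norm (s (Suc n) * r ^ Suc n) \<le> B * r * r ^ n" for n
  proof -
    have "norm (s (Suc n) * r ^ Suc n) = s (Suc n) * r ^ Suc n" using sge r0 by simp
    also have "\<dots> \<le> B * r ^ Suc n" using sB[of "Suc n"] r0 by (intro mult_right_mono) auto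
    finally show ?thesis by (simp add: mult.assoc)
  qed
  have sm1: "summable (\<lambda>n. s (Suc n) * r ^ Suc n)"
    by (rule summable_comparison_test[OF _ sums_summable[OF gs]]) (use cmp in blast)
  hence sm: "summable (\<lambda>n. s n * r ^ n)" by (subst summable_Suc_iff[symmetric])
  have "(\<Sum>n. s (Suc n) * r ^ Suc n) \<le> (\<Sum>n. B * r * r ^ n)"
  proof (rule suminf_le[OF _ sm1 sums_summable[OF gs]])
    fix n
    have "s (Suc n) * r ^ Suc n \<le> norm (s (Suc n) * r ^ Suc n)" unfolding real_norm_def by (rule abs_ge_self)
    thus "s (Suc n) * r ^ Suc n \<le> B * r * r ^ n" using cmp[of n] by linarith
  qed
  also have "\<dots> = B * (r / (1 - r))" using sums_unique[OF gs] by simp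
  also have "\<dots> \<le> B * ((1 + \<gamma>) / 2)"
  proof (rule mult_left_mono[OF _ B0])
    have "r * (3 + \<gamma>) \<le> 1 + \<gamma>" using rle g0 by (simp add: pos_le_divide_eq)
    hence "r * 2 \<le> (1 + \<gamma>) * (1 - r)" by (simp add: algebra_simps)
    hence "r \<le> (1 + \<gamma>) / 2 * (1 - r)" by simp
    thus "r / (1 - r) \<le> (1 + \<gamma>) / 2" using r1 by (simp add: pos_divide_le_eq)
  qed
  also have "\<dots> = 1 - s 0" unfolding B_def using g0 by (simp add: field_simps)
  finally have "s 0 + (\<Sum>n. s (Suc n) * r ^ Suc n) \<le> 1" by simp
  with sm show ?thesis unfolding s_def by simp
qed

end
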